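(* Consider the regression model $Y_i=f(Z_i)+\xi_i$, $i=1,\dots,n$, with deterministic design points $Z_i$ in an arbitrary set $\mathcal Z$, arbitrary $f:\mathcal Z\to\mathbb R$, and i.i.d. zero-mean errors $\xi_i$ whose distribution satisfies Assumption N (see context) with some $t_0\in(0,\infty]$ and some bounded Borel $v:\mathbb R\to\mathbb R_+$. Let $f_1,\dots,f_M:\mathcal Z\to\mathbb R$ be given functions, and let $L\in(0,+\infty]$ be the smallest positive number such that $\max_{i}|f_j(Z_i)-f_k(Z_i)|\le L$ for all $j,k\in\{1,\dots,M\}$. Then for the exponentially weighted aggregate $\widehat f_n$ with the uniform prior $\pi(\{j\})=1/M$, $j=1,\dots,M$, and any $\beta\ge\max(4\|v\|_\infty,2L/t_0)$, $$\mathbf E\big[\|\widehat f_n-f\|_n^2\big]\le\min_{j=1,\dots,M}\|f_j-f\|_n^2+\frac{\beta\log M}{n}.$$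
   Context: $\|h\|_n=\big(\frac1n\sum_{i=1}^n h(Z_i)^2\big)^{1/2}$. With $\mathbf Y=(Y_1,\dots,Y_n)^\top$ and $\boldsymbol f_j=(f_j(Z_1),\dots,f_j(Z_n))^\top$, the exponentially weighted aggregate with prior $\pi$ on $\{1,\dots,M\}$ and temperature $\beta>0$ is $\widehat f_n=\sum_{j=1}^M w_j f_j$ with $w_j\propto\exp\{-\beta^{-1}\|\mathbf Y-\boldsymbol f_j\|_2^2\}\pi(\{j\})$, $\sum_j w_j=1$. $\|v\|_\infty$ is the $L_\infty(\mathbb R)$-norm of $v$; convention $\frac{+\infty}{+\infty}=0$. Assumption N: for any $\gamma>0$ small enough there exist a probability space and random variables $\xi,\zeta$ on it such that (i) $\xi$ has the same distribution as the errors $\xi_i$; (ii) $\xi+\zeta$ has the same distribution as $(1+\gamma)\xi$ and $\mathbf E[\zeta\mid\xi]=0$; (iii) there exist $t_0\in(0,\infty]$ and a bounded Borel function $v:\mathbb R\to\mathbb R_+$ such that $\limsup_{\gamma\to0}\sup_{(t,a)\in[-t_0,t_0]\times\mathrm{supp}(\xi)}\frac{\log\mathbf E[e^{t\zeta}\mid\xi=a]}{t^2\gamma v(a)}\le1$. *)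

theory Defs
  imports "HOL-Probability.Probability"
begin

definition emp_norm :: "nat \<Rightarrow> (nat \<Rightarrow> 'z) \<Rightarrow> ('z \<Rightarrow> real) \<Rightarrow> real" where
  "emp_norm n Z h = sqrt ((1 / real n) * (\<Sum>i\<in>{1..n}. (h (Z i))\<^sup>2))"

definition ewa_weight ::
  "nat \<Rightarrow> nat \<Rightarrow> (nat \<Rightarrow> 'z) \<Rightarrow> (nat \<Rightarrow> 'z \<Rightarrow> real) \<Rightarrow> (nat \<Rightarrow> real) \<Rightarrow> real
     \<Rightarrow> (nat \<Rightarrow> real) \<Rightarrow> nat \<Rightarrow> real" where
  "ewa_weight n M Z fs pri \<beta> Y j =
     exp (- (\<Sum>i\<in>{1..n}. (Y i - fs j (Z i))\<^sup>2) / \<beta>) * pri j /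
     (\<Sum>k\<in>{1..M}. exp (- (\<Sum>i\<in>{1..n}. (Y i - fs k (Z i))\<^sup>2) / \<beta>) * pri k)"

definition ewa ::
  "nat \<Rightarrow> nat \<Rightarrow> (nat \<Rightarrow> 'z) \<Rightarrow> (nat \<Rightarrow> 'z \<Rightarrow> real) \<Rightarrow> (nat \<Rightarrow> real) \<Rightarrow> real
     \<Rightarrow> (nat \<Rightarrow> real) \<Rightarrow> 'z \<Rightarrow> real" where
  "ewa n M Z fs pri \<beta> Y z = (\<Sum>j\<in>{1..M}. ewa_weight n M Z fs pri \<beta> Y j * fs j z)"

definition dist_support :: "real measure \<Rightarrow> real set" where
  "dist_support D = {a. \<forall>e>0. emeasure D (ball a e) > 0}"

text \<open>For each small gamma the joint law of (xi, zeta) is described by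
  the law D of xi and a Markov kernel K gamma (regular conditional law of zeta given xi),
  so that E[g(zeta) | xi = a] = integral of g w.r.t. K gamma a.
  Item (iii) (limsup <= 1) is written in epsilon-delta form, with the ratio inequality
  log E[e^{t zeta}|xi=a] / (t^2 gamma v(a)) <= 1 + eps written multiplicatively
  (exponentiated).\<close>
definition assumption_N :: "real measure \<Rightarrow> ereal \<Rightarrow> (real \<Rightarrow> real) \<Rightarrow> bool" where
  "assumption_N D t0 v \<longleftrightarrow>
     t0 > 0 \<and> v \<in> borel_measurable borel \<and> (\<forall>a. v a \<ge> 0) \<and> bounded (range v) \<and>
     (\<exists>\<gamma>0>0. \<exists>K :: real \<Rightarrow> real \<Rightarrow> real measure.
        (\<forall>\<gamma>\<in>{0<..<\<gamma>0}.
           K \<gamma> \<in> borel \<rightarrow>\<^sub>M prob_algebra borel \<and>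
           (\<integral>\<^sup>+ a. \<integral>\<^sup>+ z. ennreal \<bar>z\<bar> \<partial>K \<gamma> a \<partial>D) < \<infinity> \<and>
           (AE a in D. (\<integral> z. z \<partial>K \<gamma> a) = 0) \<and>
           D \<bind> (\<lambda>a. distr (K \<gamma> a) borel (\<lambda>z. a + z)) = distr D borel (\<lambda>x. (1 + \<gamma>) * x)) \<and>
        (\<forall>\<epsilon>>0. \<exists>\<delta>>0. \<forall>\<gamma>\<in>{0<..<min \<delta> \<gamma>0}. \<forall>t a.
           ereal \<bar>t\<bar> \<le> t0 \<longrightarrow> a \<in> dist_support D \<longrightarrow>
           (\<integral>\<^sup>+ z. ennreal (exp (t * z)) \<partial>K \<gamma> a)
              \<le> ennreal (exp ((1 + \<epsilon>) * t\<^sup>2 * \<gamma> * v a))))"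

end

theory Submission
  imports Defs
begin


lemma jensen_exp_fin:
  fixes p s :: "nat \<Rightarrow> real"
  assumes "finite J" "\<And>j. j \<in> J \<Longrightarrow> p j \<ge> 0" "sum p J = 1"
  shows "exp (\<Sum>j\<in>J. p j * s j) \<le> (\<Sum>j\<in>J. p j * exp (s j))"
proof -
  define m where "m = (\<Sum>j\<in>J. p j * s j)"
  have "\<And>j. j \<in> J \<Longrightarrow> p j * (exp m * (1 + (s j - m))) \<le> p j * exp (s j)"
  proof -
    fix j assume j: "j \<in> J"
    have "exp m * (1 + (s j - m)) \<le> exp m * exp (s j - m)"
      by (intro mult_left_mono exp_ge_add_one_self) auto
    also have "\<dots> = exp (s j)" by (simp add: exp_diff)
    finally show "p j * (exp m * (1 + (s j - m))) \<le> p j * exp (s j)"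
      using assms(2)[OF j] by (intro mult_left_mono) auto
  qed
  then have "(\<Sum>j\<in>J. p j * (exp m * (1 + (s j - m)))) \<le> (\<Sum>j\<in>J. p j * exp (s j))"
    by (rule sum_mono)
  moreover have "(\<Sum>j\<in>J. p j * (exp m * (1 + (s j - m)))) = (\<Sum>j\<in>J. exp m * p j + exp m * (p j * s j) - exp m * m * p j)"
    by (intro sum.cong refl) (simp add: algebra_simps)
  moreover have "\<dots> = exp m * sum p J + exp m * m - exp m * m * sum p J"
    by (simp add: sum.distrib sum_subtractf sum_distrib_left[symmetric] m_def)
  ultimately show ?thesis using assms(3) by (simp add: m_def)
qed

locale oned =
  fixes J :: "nat set" and q e :: "nat \<Rightarrow> real" and \<beta> :: real
  assumes finJ: "finite J" and neJ: "J \<noteq> {}" and qpos: "\<And>j. j \<in> J \<Longrightarrow> q j > 0" and bpos: "\<beta> > 0"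
begin

definition G :: "real \<Rightarrow> real" where "G x = (\<Sum>j\<in>J. q j * exp (2 * x * e j / \<beta>))"
definition p :: "nat \<Rightarrow> real \<Rightarrow> real" where "p j x = q j * exp (2 * x * e j / \<beta>) / G x"
definition h :: "real \<Rightarrow> real" where "h x = (\<Sum>j\<in>J. p j x * e j)"
definition V :: "real \<Rightarrow> real" where "V x = (\<Sum>j\<in>J. p j x * (e j - h x)\<^sup>2)"
definition H :: "real \<Rightarrow> real" where "H x = \<beta> / 2 * ln (G x)"

lemma G_pos: "G x > 0"
  unfolding G_def using finJ neJ qpos by (intro sum_pos) auto

lemma p_nonneg: "p j x \<ge> 0" if "j \<in> J"
  unfolding p_def using G_pos[of x] qpos[OF that] by simp

lemma p_le1: "p j x \<le> 1" if "j \<in> J"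
proof -
  have "q j * exp (2 * x * e j / \<beta>) \<le> G x" unfolding G_def
    using that finJ qpos by (intro member_le_sum) (auto intro: less_imp_le)
  then show ?thesis unfolding p_def using G_pos[of x] by simp
qed

lemma sum_p: "(\<Sum>j\<in>J. p j x) = 1"
  unfolding p_def using G_pos[of x] by (simp add: sum_divide_distrib[symmetric] G_def)

lemma G_shift: "G (x + z) = G x * (\<Sum>j\<in>J. p j x * exp (2 * z * e j / \<beta>))"
proof -
  have "G x * (\<Sum>j\<in>J. p j x * exp (2 * z * e j / \<beta>)) = (\<Sum>j\<in>J. q j * exp (2 * x * e j / \<beta>) * exp (2 * z * e j / \<beta>))"
    unfolding p_def using G_pos[of x] by (simp add: sum_distrib_left)
  also have "\<dots> = G (x + z)" unfolding G_def
    by (intro sum.cong refl) (simp add: mult.assoc exp_add[symmetric] add_divide_distrib algebra_simps)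
  finally show ?thesis ..
qed

lemma h_bound: "\<bar>h x\<bar> \<le> (\<Sum>j\<in>J. \<bar>e j\<bar>)"
proof -
  have "\<bar>h x\<bar> \<le> (\<Sum>j\<in>J. \<bar>p j x * e j\<bar>)" unfolding h_def by (rule sum_abs)
  also have "\<dots> \<le> (\<Sum>j\<in>J. \<bar>e j\<bar>)"
    using p_nonneg p_le1 by (intro sum_mono) (auto simp: abs_mult intro!: mult_left_le_one_le)
  finally show ?thesis .
qed

lemma H_conv: "H u - H x \<ge> (u - x) * h x"
proof -
  define S where "S = (\<Sum>j\<in>J. p j x * exp (2 * (u - x) * e j / \<beta>))"
  have GS: "G u = G x * S" using G_shift[of x "u - x"] by (simp add: S_def)
  have "exp (\<Sum>j\<in>J. p j x * (2 * (u - x) * e j / \<beta>)) \<le> S"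
    unfolding S_def by (rule jensen_exp_fin[OF finJ p_nonneg sum_p])
  moreover have "(\<Sum>j\<in>J. p j x * (2 * (u - x) * e j / \<beta>)) = 2 * (u - x) * h x / \<beta>"
    unfolding h_def by (simp add: sum_divide_distrib sum_distrib_left algebra_simps)
  ultimately have "exp (2 * (u - x) * h x / \<beta>) \<le> S" by simp
  moreover have Spos: "S > 0" using calculation exp_gt_zero[of "2 * (u - x) * h x / \<beta>"] by linarith
  ultimately have "2 * (u - x) * h x / \<beta> \<le> ln S" by (metis ln_ge_iff)
  moreover have "H u = H x + \<beta> / 2 * ln S"
    unfolding H_def GS using G_pos[of x] Spos by (simp add: ln_mult algebra_simps)
  ultimately show ?thesis using bpos by (simp add: field_simps)
qed

lemma H_upper: "H (a + z) - H a \<le> z * h a + \<beta> / 2 * ((\<Sum>j\<in>J. p j a * exp (2 * (e j - h a) / \<beta> * z)) - 1)"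
proof -
  define T where "T = (\<Sum>j\<in>J. p j a * exp (2 * (e j - h a) / \<beta> * z))"
  have Tpos: "T > 0" unfolding T_def
    using finJ neJ by (intro sum_pos) (auto simp: p_def G_pos qpos)
  have "G (a + z) = G a * (\<Sum>j\<in>J. p j a * exp (2 * z * e j / \<beta>))" by (rule G_shift)
  also have "(\<Sum>j\<in>J. p j a * exp (2 * z * e j / \<beta>)) = exp (2 * z * h a / \<beta>) * T"
    unfolding T_def sum_distrib_left
  proof (intro sum.cong refl)
    fix j
    have "2 * z * h a / \<beta> + 2 * (e j - h a) / \<beta> * z = 2 * z * e j / \<beta>"
      using bpos by (simp add: field_simps)
    then show "p j a * exp (2 * z * e j / \<beta>) = exp (2 * z * h a / \<beta>) * (p j a * exp (2 * (e j - h a) / \<beta> * z))"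
      by (metis exp_add mult.left_commute)
  qed
  finally have "G (a + z) = G a * (exp (2 * z * h a / \<beta>) * T)" .
  then have "H (a + z) = H a + z * h a + \<beta> / 2 * ln T"
    unfolding H_def using G_pos[of a] Tpos bpos by (simp add: ln_mult field_simps)
  moreover have "\<beta> / 2 * ln T \<le> \<beta> / 2 * (T - 1)"
    using Tpos bpos by (intro mult_left_mono ln_le_minus_one) auto
  ultimately show ?thesis unfolding T_def by linarith
qed

lemma H_growth: "\<bar>H u - H 0\<bar> \<le> \<bar>u\<bar> * (\<Sum>j\<in>J. \<bar>e j\<bar>)"
proof -
  define B where "B = (\<Sum>j\<in>J. \<bar>e j\<bar>)"
  have 1: "H u - H 0 \<ge> u * h 0" using H_conv[of u 0] by simp
  have 2: "H 0 - H u \<ge> - u * h u" using H_conv[of 0 u] by simp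
  have "\<bar>u * h 0\<bar> \<le> \<bar>u\<bar> * B" "\<bar>u * h u\<bar> \<le> \<bar>u\<bar> * B"
    using h_bound unfolding B_def abs_mult by (auto intro: mult_left_mono)
  with 1 2 show ?thesis unfolding B_def[symmetric] by (simp add: abs_le_iff)
qed

lemma eh_bound:
  assumes "\<And>j k. j \<in> J \<Longrightarrow> k \<in> J \<Longrightarrow> \<bar>e j - e k\<bar> \<le> L" "j \<in> J"
  shows "\<bar>e j - h x\<bar> \<le> L"
proof -
  have "(\<Sum>k\<in>J. p k x * (e j - e k)) = e j * (\<Sum>k\<in>J. p k x) - h x"
    by (simp add: h_def algebra_simps sum_subtractf sum_distrib_left)
  then have "e j - h x = (\<Sum>k\<in>J. p k x * (e j - e k))" using sum_p[of x] by simp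
  then have "\<bar>e j - h x\<bar> \<le> (\<Sum>k\<in>J. \<bar>p k x * (e j - e k)\<bar>)" by (simp add: sum_abs)
  also have "\<dots> \<le> (\<Sum>k\<in>J. p k x * L)"
    using assms p_nonneg by (intro sum_mono) (auto simp: abs_mult intro: mult_left_mono)
  also have "\<dots> = L" using sum_p[of x] by (simp add: sum_distrib_right[symmetric])
  finally show ?thesis .
qed

lemma V_nonneg: "V x \<ge> 0"
  unfolding V_def using p_nonneg by (intro sum_nonneg) auto

lemma sq_le_L: "\<bar>y\<bar> \<le> L \<Longrightarrow> y\<^sup>2 \<le> L\<^sup>2" for y L :: real
proof -
  assume a: "\<bar>y\<bar> \<le> L"
  have "\<bar>y\<bar>\<^sup>2 \<le> L\<^sup>2" by (rule power_mono[OF a]) simp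
  then show ?thesis by simp
qed

lemma V_bound:
  assumes "\<And>j k. j \<in> J \<Longrightarrow> k \<in> J \<Longrightarrow> \<bar>e j - e k\<bar> \<le> L"
  shows "V x \<le> L\<^sup>2"
proof -
  have "p j x * (e j - h x)\<^sup>2 \<le> p j x * L\<^sup>2" if j: "j \<in> J" for j
  proof -
    have "\<bar>e j - h x\<bar> \<le> L" by (rule eh_bound[OF assms j])
    then have "(e j - h x)\<^sup>2 \<le> L\<^sup>2" by (rule sq_le_L)
    then show ?thesis using p_nonneg[OF j] by (rule mult_left_mono)
  qed
  then have "V x \<le> (\<Sum>j\<in>J. p j x * L\<^sup>2)" unfolding V_def by (rule sum_mono)
  also have "\<dots> = L\<^sup>2" using sum_p[of x] by (simp add: sum_distrib_right[symmetric])
  finally show ?thesis .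
qed

lemma meas_G[measurable]: "G \<in> borel_measurable borel" unfolding G_def by measurable
lemma meas_p[measurable]: "p j \<in> borel_measurable borel" unfolding p_def by measurable
lemma meas_h[measurable]: "h \<in> borel_measurable borel" unfolding h_def by measurable
lemma meas_V[measurable]: "V \<in> borel_measurable borel" unfolding V_def by measurable
lemma meas_H[measurable]: "H \<in> borel_measurable borel" unfolding H_def by measurable

end


lemma AE_support:
  fixes D :: "real measure"
  assumes sD: "sets D = sets borel"
  shows "AE a in D. a \<in> dist_support D"
proof -
  define B where "B = {(q, r). q \<in> \<rat> \<and> r \<in> \<rat> \<and> r > 0 \<and> emeasure D (ball q r) = 0}"
  have cB: "countable B"
    by (rule countable_subset[of _ "\<rat> \<times> \<rat>"]) (auto simp: B_def countable_rat)
  have N: "(\<Union>(q, r)\<in>B. ball q r) \<in> null_sets D"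
    using cB by (intro null_sets_UN') (auto simp: B_def null_sets_def sD)
  show ?thesis
  proof (rule AE_I'[OF N], safe)
    fix a assume "a \<in> space D" "a \<notin> dist_support D"
    then obtain e where e: "e > 0" "\<not> emeasure D (ball a e) > 0"
      unfolding dist_support_def by auto
    then have e0: "emeasure D (ball a e) = 0" by (simp add: not_gr_zero)
    obtain r where r: "r \<in> \<rat>" "0 < r" "r < e / 2" using Rats_dense_in_real[of 0 "e/2"] e by auto
    obtain q where q: "q \<in> \<rat>" "a - r < q" "q < a + r" using Rats_dense_in_real[of "a - r" "a + r"] r by auto
    have sub: "ball q r \<subseteq> ball a e"
      using r q by (auto simp: ball_def dist_real_def)
    have "emeasure D (ball q r) \<le> emeasure D (ball a e)"
      by (rule emeasure_mono[OF sub]) (simp add: sD)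
    then have "emeasure D (ball q r) = 0" using e0 by simp
    then have "(q, r) \<in> B" using q r by (simp add: B_def)
    moreover have "a \<in> ball q r" using q by (auto simp: ball_def dist_real_def)
    ultimately show "a \<in> (\<Union>(q, r)\<in>B. ball q r)" by blast
  qed
qed

lemma expm1_le:
  fixes s C :: real
  assumes "0 \<le> s" "s \<le> C"
  shows "exp s - 1 \<le> s * exp C"
proof -
  have "1 - s \<le> exp (- s)" using exp_ge_add_one_self[of "-s"] by simp
  then have "exp s * (1 - s) \<le> exp s * exp (-s)" by (intro mult_left_mono) auto
  then have "exp s - 1 \<le> s * exp s" by (simp add: exp_minus field_simps)
  also have "\<dots> \<le> s * exp C" using assms by (intro mult_left_mono) auto
  finally show ?thesis .
qed

context oned begin

lemma bound_real:
  fixes L S \<gamma> \<epsilon> va a :: real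
  assumes Lb: "\<And>j k. j \<in> J \<Longrightarrow> k \<in> J \<Longrightarrow> \<bar>e j - e k\<bar> \<le> L"
    and va: "0 \<le> va" "va \<le> S" and S4: "4 * S \<le> \<beta>"
    and eps: "0 < \<epsilon>" "\<epsilon> \<le> 1" and g: "\<gamma> > 0"
  shows "\<beta> / 2 * ((\<Sum>j\<in>J. p j a * exp ((1 + \<epsilon>) * (2 * (e j - h a) / \<beta>)\<^sup>2 * \<gamma> * va)) - 1)
         \<le> exp (\<gamma> * (2 * L\<^sup>2 / \<beta>)) * (1 + \<epsilon>) / 2 * \<gamma> * V a"
proof -
  define C where "C = \<gamma> * (2 * L\<^sup>2 / \<beta>)"
  define s where "s j = (1 + \<epsilon>) * (2 * (e j - h a) / \<beta>)\<^sup>2 * \<gamma> * va" for j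
  have sq4: "(2 * y / \<beta>)\<^sup>2 = 4 * y\<^sup>2 / \<beta>\<^sup>2" for y
    by (simp add: power_divide power_mult_distrib)
  have sC: "0 \<le> s j \<and> s j \<le> C" if j: "j \<in> J" for j
  proof
    show "0 \<le> s j" unfolding s_def using eps g va by simp
    have eh: "(e j - h a)\<^sup>2 \<le> L\<^sup>2"
      using eh_bound[OF Lb j, of a] by (rule sq_le_L)
    have "s j = (1 + \<epsilon>) * (4 * (e j - h a)\<^sup>2 / \<beta>\<^sup>2) * \<gamma> * va"
      unfolding s_def sq4 by simp
    also have "\<dots> \<le> 2 * (4 * L\<^sup>2 / \<beta>\<^sup>2) * \<gamma> * (\<beta> / 4)"
      using eps g va S4 eh bpos
      by (intro mult_mono divide_right_mono) auto
    also have "\<dots> = C" unfolding C_def using bpos by (simp add: power2_eq_square field_simps)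
    finally show "s j \<le> C" .
  qed
  have "(\<Sum>j\<in>J. p j a * exp (s j)) - 1 = (\<Sum>j\<in>J. p j a * (exp (s j) - 1))"
    using sum_p[of a] by (simp add: algebra_simps sum_subtractf)
  also have "\<dots> \<le> (\<Sum>j\<in>J. p j a * (s j * exp C))"
    using sC p_nonneg by (intro sum_mono mult_left_mono expm1_le) auto
  also have "\<dots> = exp C * (1 + \<epsilon>) * \<gamma> * va * (4 / \<beta>\<^sup>2) * V a"
    unfolding V_def s_def sq4 sum_distrib_left
    by (intro sum.cong refl) (simp add: field_simps)
  finally have 1: "\<beta> / 2 * ((\<Sum>j\<in>J. p j a * exp (s j)) - 1) \<le> \<beta> / 2 * (exp C * (1 + \<epsilon>) * \<gamma> * va * (4 / \<beta>\<^sup>2) * V a)"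
    using bpos by (intro mult_left_mono) auto
  have "\<beta> / 2 * (exp C * (1 + \<epsilon>) * \<gamma> * va * (4 / \<beta>\<^sup>2) * V a) = exp C * (1 + \<epsilon>) * \<gamma> * V a * (2 * va / \<beta>)"
    using bpos by (simp add: power2_eq_square field_simps)
  also have "\<dots> \<le> exp C * (1 + \<epsilon>) * \<gamma> * V a * (1 / 2)"
    using va S4 bpos eps g V_nonneg[of a] by (intro mult_left_mono) (auto simp: field_simps)
  finally show ?thesis using 1 unfolding s_def C_def by simp
qed

end

context oned begin

lemma step:
  fixes D :: "real measure" and K :: "real \<Rightarrow> real measure" and v :: "real \<Rightarrow> real"
    and t0 :: ereal and L \<gamma> \<epsilon> S :: real
  assumes pD: "prob_space D" and sD: "sets D = sets borel" and iD: "integrable D (\<lambda>x. x)"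
    and mD: "(\<integral>x. x \<partial>D) = 0"
    and Lb: "\<And>j k. j \<in> J \<Longrightarrow> k \<in> J \<Longrightarrow> \<bar>e j - e k\<bar> \<le> L"
    and t0: "ereal (2 * L / \<beta>) \<le> t0"
    and vnn: "\<And>a. v a \<ge> 0" and vS: "\<And>a. v a \<le> S" and S4: "4 * S \<le> \<beta>"
    and g: "\<gamma> > 0" and eps: "0 < \<epsilon>" "\<epsilon> \<le> 1"
    and Km: "K \<in> borel \<rightarrow>\<^sub>M prob_algebra borel"
    and Kint: "(\<integral>\<^sup>+ a. \<integral>\<^sup>+ z. ennreal \<bar>z\<bar> \<partial>K a \<partial>D) < \<infinity>"
    and Kmean: "AE a in D. (\<integral> z. z \<partial>K a) = 0"
    and Kbind: "D \<bind> (\<lambda>a. distr (K a) borel (\<lambda>z. a + z)) = distr D borel (\<lambda>x. (1 + \<gamma>) * x)"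
    and mgf: "\<And>t a. ereal \<bar>t\<bar> \<le> t0 \<Longrightarrow> a \<in> dist_support D \<Longrightarrow>
                 (\<integral>\<^sup>+ z. ennreal (exp (t * z)) \<partial>K a) \<le> ennreal (exp ((1 + \<epsilon>) * t\<^sup>2 * \<gamma> * v a))"
  shows "(\<integral>x. x * h x \<partial>D) \<le> exp (\<gamma> * (2 * L\<^sup>2 / \<beta>)) * (1 + \<epsilon>) / 2 * (\<integral>x. V x \<partial>D)"
proof -
  interpret D: prob_space D by fact
  have mDb: "measurable D N = measurable borel N" for N by (rule measurable_cong_sets[OF sD refl])
  define B where "B = (\<Sum>j\<in>J. \<bar>e j\<bar>)"
  define c where "c = exp (\<gamma> * (2 * L\<^sup>2 / \<beta>)) * (1 + \<epsilon>) / 2"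
  have c0: "c \<ge> 0" unfolding c_def using eps by simp
  define gg where "gg u = H u - H 0 - u * h 0" for u
  have B0: "B \<ge> 0" unfolding B_def by (simp add: sum_nonneg)
  have gg_nn: "gg u \<ge> 0" for u unfolding gg_def using H_conv[of u 0] by simp
  have gg_bd: "\<bar>gg u\<bar> \<le> 2 * B * \<bar>u\<bar>" for u
  proof -
    have "\<bar>u * h 0\<bar> \<le> \<bar>u\<bar> * B" unfolding abs_mult B_def by (intro mult_left_mono h_bound) auto
    moreover have "\<bar>H u - H 0 - u * h 0\<bar> \<le> \<bar>H u - H 0\<bar> + \<bar>u * h 0\<bar>" by (rule abs_triangle_ineq4)
    moreover have "2 * B * \<bar>u\<bar> = \<bar>u\<bar> * B + \<bar>u\<bar> * B" by simp
    ultimately show ?thesis using H_growth[of u] unfolding gg_def B_def[symmetric] by linarith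
  qed
  have gg_m[measurable]: "gg \<in> borel_measurable borel" unfolding gg_def by measurable
  have Km': "K \<in> D \<rightarrow>\<^sub>M subprob_algebra borel"
    unfolding mDb by (rule measurable_prob_algebraD[OF Km])
  have iV: "integrable D V"
  proof (rule D.integrable_const_bound[where B="L\<^sup>2"])
    show "AE x in D. norm (V x) \<le> L\<^sup>2" using V_nonneg V_bound[OF Lb] by simp
    show "V \<in> borel_measurable D" unfolding mDb by simp
  qed
  have iabs: "integrable D (\<lambda>x. c' * \<bar>x\<bar>)" for c' using iD by simp
  have ixh: "integrable D (\<lambda>x. x * h x)"
  proof (rule Bochner_Integration.integrable_bound[OF iabs[of B]])
    show "(\<lambda>x. x * h x) \<in> borel_measurable D" unfolding mDb by simp
    show "AE x in D. norm (x * h x) \<le> norm (B * \<bar>x\<bar>)"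
    proof (rule AE_I2)
      fix x
      have "\<bar>x\<bar> * \<bar>h x\<bar> \<le> \<bar>x\<bar> * B" unfolding B_def by (rule mult_left_mono[OF h_bound abs_ge_zero])
      then show "norm (x * h x) \<le> norm (B * \<bar>x\<bar>)" using B0 by (simp add: abs_mult mult.commute)
    qed
  qed
  have igg: "integrable D gg"
  proof (rule Bochner_Integration.integrable_bound[OF iabs[of "2 * B"]])
    show "gg \<in> borel_measurable D" unfolding mDb by simp
    show "AE x in D. norm (gg x) \<le> norm (2 * B * \<bar>x\<bar>)" using gg_bd B0 by simp
  qed
  have iggs: "integrable D (\<lambda>x. gg ((1 + \<gamma>) * x))"
  proof (rule Bochner_Integration.integrable_bound[OF iabs[of "2 * B * (1 + \<gamma>)"]])
    show "(\<lambda>x. gg ((1 + \<gamma>) * x)) \<in> borel_measurable D" unfolding mDb by simp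
    show "AE x in D. norm (gg ((1 + \<gamma>) * x)) \<le> norm (2 * B * (1 + \<gamma>) * \<bar>x\<bar>)"
    proof (rule AE_I2)
      fix x
      have "\<bar>(1 + \<gamma>) * x\<bar> = (1 + \<gamma>) * \<bar>x\<bar>" using g by (simp add: abs_mult)
      then show "norm (gg ((1 + \<gamma>) * x)) \<le> norm (2 * B * (1 + \<gamma>) * \<bar>x\<bar>)"
        using gg_bd[of "(1 + \<gamma>) * x"] B0 g by (simp add: abs_mult mult.assoc)
    qed
  qed
  have AE1: "AE a in D. (\<integral>\<^sup>+ z. ennreal \<bar>z\<bar> \<partial>K a) \<noteq> \<infinity>"
  proof (rule nn_integral_PInf_AE)
    show "(\<lambda>a. \<integral>\<^sup>+ z. ennreal \<bar>z\<bar> \<partial>K a) \<in> borel_measurable D"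
      by (rule measurable_compose[OF Km' nn_integral_measurable_subprob_algebra]) simp
  qed (use Kint in auto)
  have inner: "AE a in D. (\<integral>\<^sup>+ z. ennreal (gg (a + z)) \<partial>K a) \<le> ennreal (gg a + c * \<gamma> * V a)"
    using AE1 Kmean AE_support[OF sD]
  proof eventually_elim
    case (elim a)
    have "K a \<in> space (prob_algebra borel)" using measurable_space[OF Km] by simp
    then have pK: "prob_space (K a)" and sK: "sets (K a) = sets borel" by (auto simp: space_prob_algebra)
    interpret Ka: prob_space "K a" by fact
    have mK: "measurable (K a) N = measurable borel N" for N by (rule measurable_cong_sets[OF sK refl])
    have iz: "integrable (K a) (\<lambda>z. z)"
    proof (rule integrableI_bounded)
      show "(\<lambda>z. z) \<in> borel_measurable (K a)" unfolding mK by simp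
      show "(\<integral>\<^sup>+ z. ennreal (norm z) \<partial>K a) < \<infinity>" using elim(1) by (simp add: less_top)
    qed
    define t where "t j = 2 * (e j - h a) / \<beta>" for j
    define s where "s j = (1 + \<epsilon>) * (t j)\<^sup>2 * \<gamma> * v a" for j
    have ie: "integrable (K a) (\<lambda>z. exp (t j * z)) \<and> (\<integral>z. exp (t j * z) \<partial>K a) \<le> exp (s j)"
      if j: "j \<in> J" for j
    proof -
      have "\<bar>t j\<bar> \<le> 2 * L / \<beta>"
        using eh_bound[OF Lb j, of a] bpos by (simp add: t_def abs_mult abs_divide divide_right_mono)
      then have "ereal \<bar>t j\<bar> \<le> t0" using t0 by (meson ereal_less_eq(3) order_trans)
      then have mg: "(\<integral>\<^sup>+ z. ennreal (exp (t j * z)) \<partial>K a) \<le> ennreal (exp (s j))"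
        unfolding s_def using mgf elim(3) by blast
      have int: "integrable (K a) (\<lambda>z. exp (t j * z))"
      proof (rule integrableI_bounded)
        show "(\<lambda>z. exp (t j * z)) \<in> borel_measurable (K a)" unfolding mK by simp
        have "(\<integral>\<^sup>+ z. ennreal (norm (exp (t j * z))) \<partial>K a) = (\<integral>\<^sup>+ z. ennreal (exp (t j * z)) \<partial>K a)"
          by simp
        also have "\<dots> < \<infinity>" using mg by (rule order.strict_trans1) simp
        finally show "(\<integral>\<^sup>+ z. ennreal (norm (exp (t j * z))) \<partial>K a) < \<infinity>" .
      qed
      have "ennreal (\<integral>z. exp (t j * z) \<partial>K a) = (\<integral>\<^sup>+ z. ennreal (exp (t j * z)) \<partial>K a)"
        by (rule nn_integral_eq_integral[OF int, symmetric]) simp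
      with mg have "ennreal (\<integral>z. exp (t j * z) \<partial>K a) \<le> ennreal (exp (s j))" by simp
      then show ?thesis using int by (simp add: ennreal_le_iff)
    qed
    have iH: "integrable (K a) (\<lambda>z. H (a + z))"
    proof (rule Bochner_Integration.integrable_bound)
      show "integrable (K a) (\<lambda>z. \<bar>H 0\<bar> + B * \<bar>a\<bar> + B * \<bar>z\<bar>)" using iz by simp
      show "(\<lambda>z. H (a + z)) \<in> borel_measurable (K a)" unfolding mK by simp
      show "AE z in K a. norm (H (a + z)) \<le> norm (\<bar>H 0\<bar> + B * \<bar>a\<bar> + B * \<bar>z\<bar>)"
      proof (rule AE_I2)
        fix z
        have "\<bar>H (a + z) - H 0\<bar> \<le> \<bar>a + z\<bar> * B" using H_growth[of "a + z"] by (simp add: B_def)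
        also have "\<dots> \<le> (\<bar>a\<bar> + \<bar>z\<bar>) * B" using B0 by (intro mult_right_mono abs_triangle_ineq) auto
        finally show "norm (H (a + z)) \<le> norm (\<bar>H 0\<bar> + B * \<bar>a\<bar> + B * \<bar>z\<bar>)"
          using B0 by (simp add: algebra_simps)
      qed
    qed
    have iS: "integrable (K a) (\<lambda>z. H a + z * h a + \<beta> / 2 * ((\<Sum>j\<in>J. p j a * exp (t j * z)) - 1))"
      using iz ie by (intro Bochner_Integration.integrable_add Bochner_Integration.integrable_diff
          integrable_mult_right integrable_mult_left Bochner_Integration.integrable_sum) auto
    have "(\<integral>z. H (a + z) \<partial>K a) \<le> (\<integral>z. H a + z * h a + \<beta> / 2 * ((\<Sum>j\<in>J. p j a * exp (t j * z)) - 1) \<partial>K a)"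
    proof (rule integral_mono[OF iH iS])
      fix z
      show "H (a + z) \<le> H a + z * h a + \<beta> / 2 * ((\<Sum>j\<in>J. p j a * exp (t j * z)) - 1)"
        using H_upper[of a z] unfolding t_def by linarith
    qed
    also have "\<dots> = H a + (\<integral>z. z \<partial>K a) * h a + \<beta> / 2 * ((\<Sum>j\<in>J. p j a * (\<integral>z. exp (t j * z) \<partial>K a)) - 1)"
      using iz ie by (simp add: Bochner_Integration.integral_add Bochner_Integration.integral_diff
            integrable_mult_right integrable_mult_left Bochner_Integration.integrable_sum
            Bochner_Integration.integral_sum Bochner_Integration.integral_mult_right integral_mult_left Ka.prob_space)
    also have "\<dots> \<le> H a + \<beta> / 2 * ((\<Sum>j\<in>J. p j a * exp (s j)) - 1)"
      using elim(2) ie p_nonneg bpos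
      by (auto intro!: mult_left_mono sum_mono)
    also have "\<dots> \<le> H a + c * \<gamma> * V a"
      using bound_real[OF Lb vnn vS S4 eps g, of a] unfolding s_def t_def c_def by simp
    finally have Hle: "(\<integral>z. H (a + z) \<partial>K a) \<le> H a + c * \<gamma> * V a" .
    have igz: "integrable (K a) (\<lambda>z. gg (a + z))"
      unfolding gg_def using iH iz by simp
    have "(\<integral>z. gg (a + z) \<partial>K a) = (\<integral>z. H (a + z) \<partial>K a) - H 0 - a * h 0 - (\<integral>z. z \<partial>K a) * h 0"
      unfolding gg_def using iH iz
      by (simp add: Bochner_Integration.integral_diff algebra_simps integral_mult_left Ka.prob_space)
    also have "\<dots> \<le> gg a + c * \<gamma> * V a" using Hle elim(2) unfolding gg_def by simp
    finally have "(\<integral>z. gg (a + z) \<partial>K a) \<le> gg a + c * \<gamma> * V a" .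
    moreover have "(\<integral>\<^sup>+ z. ennreal (gg (a + z)) \<partial>K a) = ennreal (\<integral>z. gg (a + z) \<partial>K a)"
      by (rule nn_integral_eq_integral[OF igz]) (simp add: gg_nn)
    ultimately show ?case by (simp add: ennreal_leI)
  qed
  have Nm: "(\<lambda>a. distr (K a) borel (\<lambda>z. a + z)) \<in> D \<rightarrow>\<^sub>M subprob_algebra borel"
    unfolding mDb by (intro measurable_prob_algebraD measurable_distr_prob_space2[OF Km]) simp
  have "ennreal (\<integral>x. gg ((1 + \<gamma>) * x) \<partial>D) = (\<integral>\<^sup>+ x. ennreal (gg ((1 + \<gamma>) * x)) \<partial>D)"
    by (rule nn_integral_eq_integral[OF iggs, symmetric]) (simp add: gg_nn)
  also have "\<dots> = (\<integral>\<^sup>+ u. ennreal (gg u) \<partial>distr D borel (\<lambda>x. (1 + \<gamma>) * x))"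
    by (rule nn_integral_distr[symmetric]) (simp_all add: mDb)
  also have "\<dots> = (\<integral>\<^sup>+ u. ennreal (gg u) \<partial>(D \<bind> (\<lambda>a. distr (K a) borel (\<lambda>z. a + z))))"
    by (simp add: Kbind)
  also have "\<dots> = (\<integral>\<^sup>+ a. \<integral>\<^sup>+ u. ennreal (gg u) \<partial>distr (K a) borel (\<lambda>z. a + z) \<partial>D)"
    by (rule nn_integral_bind[OF _ Nm]) simp
  also have "\<dots> = (\<integral>\<^sup>+ a. \<integral>\<^sup>+ z. ennreal (gg (a + z)) \<partial>K a \<partial>D)"
  proof (rule nn_integral_cong)
    fix a assume "a \<in> space D"
    have "K a \<in> space (prob_algebra borel)" using measurable_space[OF Km] by simp
    then have sK: "sets (K a) = sets borel" by (auto simp: space_prob_algebra)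
    show "(\<integral>\<^sup>+ u. ennreal (gg u) \<partial>distr (K a) borel (\<lambda>z. a + z)) = (\<integral>\<^sup>+ z. ennreal (gg (a + z)) \<partial>K a)"
      by (rule nn_integral_distr) (simp_all add: measurable_cong_sets[OF sK refl])
  qed
  also have "\<dots> \<le> (\<integral>\<^sup>+ a. ennreal (gg a + c * \<gamma> * V a) \<partial>D)"
    by (rule nn_integral_mono_AE[OF inner])
  also have "\<dots> = ennreal (\<integral>a. gg a + c * \<gamma> * V a \<partial>D)"
    using igg iV gg_nn V_nonneg g c0
    by (intro nn_integral_eq_integral) (auto intro!: AE_I2 add_nonneg_nonneg mult_nonneg_nonneg)
  finally have "ennreal (\<integral>x. gg ((1 + \<gamma>) * x) \<partial>D) \<le> ennreal (\<integral>a. gg a + c * \<gamma> * V a \<partial>D)" .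
  then have gle: "(\<integral>x. gg ((1 + \<gamma>) * x) \<partial>D) \<le> (\<integral>a. gg a + c * \<gamma> * V a \<partial>D)"
    using igg iV gg_nn V_nonneg g c0
    by (subst (asm) ennreal_le_iff) (auto intro!: integral_nonneg_AE AE_I2 add_nonneg_nonneg mult_nonneg_nonneg)
  have pw: "\<gamma> * (x * h x) \<le> gg ((1 + \<gamma>) * x) - gg x + \<gamma> * h 0 * x" for x
    using H_conv[of "(1 + \<gamma>) * x" x] unfolding gg_def by (simp add: algebra_simps)
  have "\<gamma> * (\<integral>x. x * h x \<partial>D) = (\<integral>x. \<gamma> * (x * h x) \<partial>D)" by simp
  also have "\<dots> \<le> (\<integral>x. gg ((1 + \<gamma>) * x) - gg x + \<gamma> * h 0 * x \<partial>D)"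
    using ixh iggs igg iD pw by (intro integral_mono) auto
  also have "\<dots> = (\<integral>x. gg ((1 + \<gamma>) * x) \<partial>D) - (\<integral>x. gg x \<partial>D) + \<gamma> * h 0 * (\<integral>x. x \<partial>D)"
    using iggs igg iD by simp
  also have "\<dots> \<le> \<gamma> * (c * (\<integral>x. V x \<partial>D))"
    using gle igg iV mD by (simp add: algebra_simps)
  finally have "\<gamma> * (\<integral>x. x * h x \<partial>D) \<le> \<gamma> * (c * (\<integral>x. V x \<partial>D))" .
  then show ?thesis using g unfolding c_def by simp
qed

end

lemma eps_limit:
  fixes A W :: real
  assumes W: "W \<ge> 0" and H: "\<And>\<epsilon>. 0 < \<epsilon> \<Longrightarrow> \<epsilon> \<le> 1 \<Longrightarrow> A \<le> (1 + \<epsilon>) * (1 + \<epsilon>) / 2 * W"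
  shows "A \<le> W / 2"
proof (rule field_le_epsilon)
  fix d :: real assume d: "0 < d"
  define \<epsilon> where "\<epsilon> = min 1 (d / (3 * W / 2 + 1))"
  have e0: "0 < \<epsilon>" "\<epsilon> \<le> 1" unfolding \<epsilon>_def using d W by auto
  have pos: "3 * W / 2 + 1 > 0" using W by simp
  have "\<epsilon> \<le> d / (3 * W / 2 + 1)" unfolding \<epsilon>_def by simp
  then have "\<epsilon> * (3 * W / 2 + 1) \<le> d / (3 * W / 2 + 1) * (3 * W / 2 + 1)"
    using pos by (intro mult_right_mono) auto
  also have "\<dots> = d" using pos by simp
  finally have e1: "\<epsilon> * (3 * W / 2 + 1) \<le> d" .
  have "\<epsilon> * \<epsilon> \<le> \<epsilon> * 1" using e0 by (intro mult_left_mono) auto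
  moreover have "(1 + \<epsilon>) * (1 + \<epsilon>) = 1 + 2 * \<epsilon> + \<epsilon> * \<epsilon>" by (simp add: algebra_simps)
  ultimately have "(1 + \<epsilon>) * (1 + \<epsilon>) \<le> 1 + 3 * \<epsilon>" by linarith
  then have "(1 + \<epsilon>) * (1 + \<epsilon>) / 2 * W \<le> (1 + 3 * \<epsilon>) / 2 * W"
    using W by (intro mult_right_mono divide_right_mono) auto
  also have "\<dots> = W / 2 + \<epsilon> * (3 * W / 2)" by (simp add: field_simps)
  also have "\<dots> \<le> W / 2 + d"
  proof -
    have "\<epsilon> * (3 * W / 2) \<le> \<epsilon> * (3 * W / 2 + 1)" using e0 by (intro mult_left_mono) auto
    then show ?thesis using e1 by linarith
  qed
  finally show "A \<le> W / 2 + d" using H[OF e0] by linarith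
qed

context oned begin

lemma oned_main:
  fixes D :: "real measure" and v :: "real \<Rightarrow> real" and t0 :: ereal and L :: real
  assumes pD: "prob_space D" and sD: "sets D = sets borel" and iD: "integrable D (\<lambda>x. x)"
    and mD: "(\<integral>x. x \<partial>D) = 0" and AN: "assumption_N D t0 v"
    and Lb: "\<And>j k. j \<in> J \<Longrightarrow> k \<in> J \<Longrightarrow> \<bar>e j - e k\<bar> \<le> L"
    and b4: "4 * (SUP a. \<bar>v a\<bar>) \<le> \<beta>"
    and t0: "ereal (2 * L / \<beta>) \<le> t0"
  shows "integrable D (\<lambda>x. x * h x)" "integrable D V" "(\<integral>x. x * h x \<partial>D) \<le> (\<integral>x. V x \<partial>D) / 2"
proof -
  interpret D: prob_space D by fact
  have mDb: "measurable D N = measurable borel N" for N by (rule measurable_cong_sets[OF sD refl])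
  define B where "B = (\<Sum>j\<in>J. \<bar>e j\<bar>)"
  have B0: "B \<ge> 0" unfolding B_def by (simp add: sum_nonneg)
  have iabs: "integrable D (\<lambda>x. c' * \<bar>x\<bar>)" for c' using iD by simp
  show ixh: "integrable D (\<lambda>x. x * h x)"
  proof (rule Bochner_Integration.integrable_bound[OF iabs[of B]])
    show "(\<lambda>x. x * h x) \<in> borel_measurable D" unfolding mDb by simp
    show "AE x in D. norm (x * h x) \<le> norm (B * \<bar>x\<bar>)"
    proof (rule AE_I2)
      fix x
      have "\<bar>x\<bar> * \<bar>h x\<bar> \<le> \<bar>x\<bar> * B" unfolding B_def by (rule mult_left_mono[OF h_bound abs_ge_zero])
      then show "norm (x * h x) \<le> norm (B * \<bar>x\<bar>)" using B0 by (simp add: abs_mult mult.commute)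
    qed
  qed
  from AN obtain \<gamma>0 K where g0: "\<gamma>0 > 0"
    and Kall: "\<forall>\<gamma>\<in>{0<..<\<gamma>0}.
           K \<gamma> \<in> borel \<rightarrow>\<^sub>M prob_algebra borel \<and>
           (\<integral>\<^sup>+ a. \<integral>\<^sup>+ z. ennreal \<bar>z\<bar> \<partial>K \<gamma> a \<partial>D) < \<infinity> \<and>
           (AE a in D. (\<integral> z. z \<partial>K \<gamma> a) = 0) \<and>
           D \<bind> (\<lambda>a. distr (K \<gamma> a) borel (\<lambda>z. a + z)) = distr D borel (\<lambda>x. (1 + \<gamma>) * x)"
    and mgfN: "\<forall>\<epsilon>>0. \<exists>\<delta>>0. \<forall>\<gamma>\<in>{0<..<min \<delta> \<gamma>0}. \<forall>t a.
           ereal \<bar>t\<bar> \<le> t0 \<longrightarrow> a \<in> dist_support D \<longrightarrow>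
           (\<integral>\<^sup>+ z. ennreal (exp (t * z)) \<partial>K \<gamma> a)
              \<le> ennreal (exp ((1 + \<epsilon>) * t\<^sup>2 * \<gamma> * v a))"
    and vnn: "\<And>a. v a \<ge> 0" and vb: "bounded (range v)"
    unfolding assumption_N_def by blast
  define S where "S = (SUP a. \<bar>v a\<bar>)"
  obtain Bv where Bv: "\<And>a. norm (v a) \<le> Bv" using vb unfolding bounded_iff by blast
  have bdd: "bdd_above (range (\<lambda>a. \<bar>v a\<bar>))" using Bv by (intro bdd_aboveI2) auto
  have vS: "v a \<le> S" for a
  proof -
    have "\<bar>v a\<bar> \<le> S" unfolding S_def by (rule cSUP_upper[OF UNIV_I bdd])
    then show ?thesis by simp
  qed
  have S4: "4 * S \<le> \<beta>" using b4 unfolding S_def .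
  obtain j0 where "j0 \<in> J" using neJ by blast
  then have L0: "L \<ge> 0" using Lb[of j0 j0] by simp
  define C where "C = 2 * L\<^sup>2 / \<beta>"
  have C0: "C \<ge> 0" unfolding C_def using bpos by simp
  have V0: "(\<integral>x. V x \<partial>D) \<ge> 0" by (intro integral_nonneg_AE AE_I2 V_nonneg)
  show "integrable D V"
  proof (rule D.integrable_const_bound[where B="L\<^sup>2"])
    show "AE x in D. norm (V x) \<le> L\<^sup>2" using V_nonneg V_bound[OF Lb] by simp
    show "V \<in> borel_measurable D" unfolding mDb by simp
  qed
  show "(\<integral>x. x * h x \<partial>D) \<le> (\<integral>x. V x \<partial>D) / 2"
  proof (rule eps_limit[OF V0])
    fix \<epsilon> :: real assume eps: "0 < \<epsilon>" "\<epsilon> \<le> 1"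
    obtain \<delta> where d0: "\<delta> > 0" and dprop: "\<forall>\<gamma>\<in>{0<..<min \<delta> \<gamma>0}. \<forall>t a.
           ereal \<bar>t\<bar> \<le> t0 \<longrightarrow> a \<in> dist_support D \<longrightarrow>
           (\<integral>\<^sup>+ z. ennreal (exp (t * z)) \<partial>K \<gamma> a)
              \<le> ennreal (exp ((1 + \<epsilon>) * t\<^sup>2 * \<gamma> * v a))"
      using mgfN eps by blast
    define m where "m = min \<delta> \<gamma>0"
    have m0: "m > 0" unfolding m_def using d0 g0 by simp
    have l0: "ln (1 + \<epsilon>) > 0" using eps by simp
    define \<gamma> where "\<gamma> = min (m / 2) (ln (1 + \<epsilon>) / (C + 1))"
    have g: "\<gamma> > 0" unfolding \<gamma>_def using m0 l0 C0 by simp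
    have gm: "\<gamma> < m" unfolding \<gamma>_def using m0 by simp
    have "\<gamma> * C \<le> ln (1 + \<epsilon>) / (C + 1) * C"
      unfolding \<gamma>_def using C0 by (intro mult_right_mono) auto
    also have "\<dots> \<le> ln (1 + \<epsilon>)" using C0 l0 by (simp add: field_simps)
    finally have "exp (\<gamma> * C) \<le> 1 + \<epsilon>" using eps by (metis exp_le_cancel_iff exp_ln add_pos_pos zero_less_one)
    have gin: "\<gamma> \<in> {0<..<\<gamma>0}" using g gm unfolding m_def by simp
    have gin2: "\<gamma> \<in> {0<..<min \<delta> \<gamma>0}" using g gm unfolding m_def by simp
    have "(\<integral>x. x * h x \<partial>D) \<le> exp (\<gamma> * (2 * L\<^sup>2 / \<beta>)) * (1 + \<epsilon>) / 2 * (\<integral>x. V x \<partial>D)"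
    proof -
      have KK: "K \<gamma> \<in> borel \<rightarrow>\<^sub>M prob_algebra borel"
           "(\<integral>\<^sup>+ a. \<integral>\<^sup>+ z. ennreal \<bar>z\<bar> \<partial>K \<gamma> a \<partial>D) < \<infinity>"
           "AE a in D. (\<integral> z. z \<partial>K \<gamma> a) = 0"
           "D \<bind> (\<lambda>a. distr (K \<gamma> a) borel (\<lambda>z. a + z)) = distr D borel (\<lambda>x. (1 + \<gamma>) * x)"
        using Kall gin by blast+
      have mg: "\<And>t a. ereal \<bar>t\<bar> \<le> t0 \<Longrightarrow> a \<in> dist_support D \<Longrightarrow>
                 (\<integral>\<^sup>+ z. ennreal (exp (t * z)) \<partial>K \<gamma> a) \<le> ennreal (exp ((1 + \<epsilon>) * t\<^sup>2 * \<gamma> * v a))"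
        using dprop gin2 by blast
      show ?thesis by (rule step[OF pD sD iD mD Lb t0 vnn vS S4 g eps KK mg])
    qed
    also have "\<dots> \<le> (1 + \<epsilon>) * (1 + \<epsilon>) / 2 * (\<integral>x. V x \<partial>D)"
      using \<open>exp (\<gamma> * C) \<le> 1 + \<epsilon>\<close> eps V0 unfolding C_def
      by (intro mult_right_mono divide_right_mono mult_right_mono) auto
    finally show "(\<integral>x. x * h x \<partial>D) \<le> (1 + \<epsilon>) * (1 + \<epsilon>) / 2 * (\<integral>x. V x \<partial>D)" .
  qed
qed

end



lemma gibbs:
  fixes c :: "nat \<Rightarrow> real" and J :: "nat set"
  assumes fin: "finite J" and k: "k \<in> J" and b: "\<beta> > 0" and pi: "\<pi> > 0"
  shows "(\<Sum>j\<in>J. (exp (- c j / \<beta>) * \<pi> / (\<Sum>l\<in>J. exp (- c l / \<beta>) * \<pi>)) * c j)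
         \<le> c k + \<beta> * ln (real (card J))"
proof -
  define Zs where "Zs = (\<Sum>l\<in>J. exp (- c l / \<beta>) * \<pi>)"
  define w where "w j = exp (- c j / \<beta>) * \<pi> / Zs" for j
  define N where "N = real (card J)"
  have Zpos: "Zs > 0" unfolding Zs_def using fin k pi by (intro sum_pos) auto
  have wpos: "w j > 0" for j unfolding w_def using Zpos pi by simp
  have wne: "w j \<noteq> 0" for j using wpos[of j] by simp
  have sumw: "(\<Sum>j\<in>J. w j) = 1" unfolding w_def using Zpos by (simp add: sum_divide_distrib[symmetric] Zs_def)
  have Npos: "N > 0" unfolding N_def using fin k by (auto simp: card_gt_0_iff)
  have cw: "c j = \<beta> * (ln \<pi> - ln Zs - ln (w j))" for j
  proof -
    have "ln (w j) = - c j / \<beta> + ln \<pi> - ln Zs"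
      unfolding w_def using Zpos pi by (simp add: ln_div ln_mult)
    then show ?thesis using b by (simp add: field_simps)
  qed
  have ent: "(\<Sum>j\<in>J. w j * (- ln N - ln (w j))) \<le> 0"
  proof -
    have "(\<Sum>j\<in>J. w j * (- ln N - ln (w j))) = (\<Sum>j\<in>J. w j * ln (1 / (N * w j)))"
      using Npos wpos by (intro sum.cong refl) (simp add: ln_div ln_mult)
    also have "\<dots> \<le> (\<Sum>j\<in>J. w j * (1 / (N * w j) - 1))"
      using Npos wpos wne by (intro sum_mono mult_left_mono ln_le_minus_one) (auto intro: less_imp_le)
    also have "\<dots> = (\<Sum>j\<in>J. (1 / N - w j))"
      using Npos wpos wne by (intro sum.cong refl) (simp add: field_simps)
    also have "\<dots> = 0" using sumw Npos by (simp add: sum_subtractf N_def)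
    finally show ?thesis .
  qed
  have eqc: "(\<Sum>j\<in>J. w j * c j) = \<beta> * (ln \<pi> - ln Zs) - \<beta> * (\<Sum>j\<in>J. w j * ln (w j))"
  proof -
    have "(\<Sum>j\<in>J. w j * c j) = \<beta> * ((ln \<pi> - ln Zs) * (\<Sum>j\<in>J. w j) - (\<Sum>j\<in>J. w j * ln (w j)))"
      unfolding cw by (simp add: sum_distrib_left sum_distrib_right sum_subtractf sum.distrib algebra_simps)
    then show ?thesis using sumw by (simp add: algebra_simps)
  qed
  have sl: "- (\<Sum>j\<in>J. w j * ln (w j)) \<le> ln N"
  proof -
    have "(\<Sum>j\<in>J. w j * (- ln N - ln (w j))) = (\<Sum>j\<in>J. - (ln N * w j)) - (\<Sum>j\<in>J. w j * ln (w j))"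
      by (simp add: algebra_simps sum_subtractf)
    also have "(\<Sum>j\<in>J. - (ln N * w j)) = - (ln N * (\<Sum>j\<in>J. w j))"
      by (simp add: sum_negf sum_distrib_left)
    finally have "(\<Sum>j\<in>J. w j * (- ln N - ln (w j))) = - ln N - (\<Sum>j\<in>J. w j * ln (w j))"
      using sumw by simp
    then show ?thesis using ent by linarith
  qed
  have ck: "\<beta> * (ln \<pi> - ln Zs) \<le> c k"
  proof -
    have "exp (- c k / \<beta>) * \<pi> \<le> Zs" unfolding Zs_def
      using fin k pi by (intro member_le_sum) auto
    then have "ln (exp (- c k / \<beta>) * \<pi>) \<le> ln Zs" using pi Zpos by simp
    then have "- c k / \<beta> + ln \<pi> \<le> ln Zs" using pi by (simp add: ln_mult)
    then show ?thesis using b by (simp add: field_simps)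
  qed
  have m: "\<beta> * (- (\<Sum>j\<in>J. w j * ln (w j))) \<le> \<beta> * ln N"
    using sl b by (intro mult_left_mono) auto
  have "(\<Sum>j\<in>J. w j * c j) \<le> c k + \<beta> * ln N" using eqc ck m by simp
  then show ?thesis unfolding w_def Zs_def N_def by simp
qed

lemma pointwise:
  fixes w :: "nat \<Rightarrow> real" and d :: "nat \<Rightarrow> nat \<Rightarrow> real" and \<xi> :: "nat \<Rightarrow> real"
  assumes sumw: "(\<Sum>j\<in>J. w j) = 1"
  shows "(\<Sum>i\<in>I. (\<Sum>j\<in>J. w j * d j i)\<^sup>2) =
     (\<Sum>j\<in>J. w j * (\<Sum>i\<in>I. (\<xi> i - d j i)\<^sup>2)) - (\<Sum>i\<in>I. (\<xi> i)\<^sup>2)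
     + (\<Sum>i\<in>I. 2 * \<xi> i * (\<Sum>j\<in>J. w j * d j i) - (\<Sum>j\<in>J. w j * (d j i - (\<Sum>j\<in>J. w j * d j i))\<^sup>2))"
proof -
  define db where "db i = (\<Sum>j\<in>J. w j * d j i)" for i
  define a where "a i = (\<Sum>j\<in>J. w j * (d j i)\<^sup>2)" for i
  have e1: "(\<Sum>j\<in>J. w j * (\<xi> i - d j i)\<^sup>2) = (\<xi> i)\<^sup>2 - 2 * \<xi> i * db i + a i" for i
  proof -
    have "(\<Sum>j\<in>J. w j * (\<xi> i - d j i)\<^sup>2) = (\<Sum>j\<in>J. (\<xi> i)\<^sup>2 * w j - 2 * \<xi> i * (w j * d j i) + w j * (d j i)\<^sup>2)"
      by (intro sum.cong refl) (simp add: power2_diff algebra_simps)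
    also have "\<dots> = (\<xi> i)\<^sup>2 * (\<Sum>j\<in>J. w j) - 2 * \<xi> i * db i + a i"
      by (simp add: sum.distrib sum_subtractf sum_distrib_left db_def a_def)
    finally show ?thesis using sumw by simp
  qed
  have e2: "(\<Sum>j\<in>J. w j * (d j i - db i)\<^sup>2) = a i - (db i)\<^sup>2" for i
  proof -
    have "(\<Sum>j\<in>J. w j * (d j i - db i)\<^sup>2) = (\<Sum>j\<in>J. w j * (d j i)\<^sup>2 - 2 * db i * (w j * d j i) + (db i)\<^sup>2 * w j)"
      by (intro sum.cong refl) (simp add: power2_diff algebra_simps)
    also have "\<dots> = a i - 2 * db i * db i + (db i)\<^sup>2 * (\<Sum>j\<in>J. w j)"
      by (simp add: sum.distrib sum_subtractf sum_distrib_left db_def a_def)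
    finally show ?thesis using sumw by (simp add: power2_eq_square)
  qed
  have "(\<Sum>j\<in>J. w j * (\<Sum>i\<in>I. (\<xi> i - d j i)\<^sup>2)) = (\<Sum>i\<in>I. \<Sum>j\<in>J. w j * (\<xi> i - d j i)\<^sup>2)"
    by (simp add: sum_distrib_left sum.swap[of _ J I])
  then show ?thesis
    unfolding db_def[symmetric]
    by (simp add: e1 e2 sum.distrib sum_subtractf algebra_simps)
qed

lemma wform:
  fixes c R e :: "nat \<Rightarrow> real" and J :: "nat set"
  assumes cj: "\<And>j. j \<in> J \<Longrightarrow> c j = (x - e j)\<^sup>2 + R j" and b: "\<beta> > 0" and j: "j \<in> J"
  shows "exp (- c j / \<beta>) * \<pi> / (\<Sum>k\<in>J. exp (- c k / \<beta>) * \<pi>) =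
    (\<pi> * exp (- (R j + (e j)\<^sup>2) / \<beta>)) * exp (2 * x * e j / \<beta>) /
    (\<Sum>k\<in>J. (\<pi> * exp (- (R k + (e k)\<^sup>2) / \<beta>)) * exp (2 * x * e k / \<beta>))"
proof -
  have t: "exp (- c k / \<beta>) * \<pi> = exp (- x\<^sup>2 / \<beta>) * ((\<pi> * exp (- (R k + (e k)\<^sup>2) / \<beta>)) * exp (2 * x * e k / \<beta>))"
    if k: "k \<in> J" for k
  proof -
    have "- c k / \<beta> = - x\<^sup>2 / \<beta> + (- (R k + (e k)\<^sup>2) / \<beta> + 2 * x * e k / \<beta>)"
      unfolding cj[OF k] using b by (simp add: field_simps power2_diff)
    then have "exp (- c k / \<beta>) = exp (- x\<^sup>2 / \<beta>) * (exp (- (R k + (e k)\<^sup>2) / \<beta>) * exp (2 * x * e k / \<beta>))"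
      by (simp only: exp_add)
    then show ?thesis by (simp add: mult_ac)
  qed
  have se: "(\<Sum>k\<in>J. exp (- c k / \<beta>) * \<pi>) = exp (- x\<^sup>2 / \<beta>) * (\<Sum>k\<in>J. (\<pi> * exp (- (R k + (e k)\<^sup>2) / \<beta>)) * exp (2 * x * e k / \<beta>))"
    by (subst sum_distrib_left, rule sum.cong[OF refl t])
  show ?thesis unfolding se t[OF j] by (rule mult_divide_mult_cancel_left) simp
qed



theorem corollary1:
  fixes D :: "real measure" and t0 :: ereal and v :: "real \<Rightarrow> real"
    and n M :: nat and Z :: "nat \<Rightarrow> 'z" and f :: "'z \<Rightarrow> real"
    and fs :: "nat \<Rightarrow> 'z \<Rightarrow> real" and \<beta> L :: real
  assumes "prob_space D" and "sets D = sets borel"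
    and "integrable D (\<lambda>x. x)" and "(\<integral> x. x \<partial>D) = 0"
    and "assumption_N D t0 v"
    and "n \<ge> 1" and "M \<ge> 1"
    and "L = Max {\<bar>fs j (Z i) - fs k (Z i)\<bar> | i j k. i \<in> {1..n} \<and> j \<in> {1..M} \<and> k \<in> {1..M}}"
    and "\<beta> > 0"
    and "\<beta> \<ge> 4 * (SUP a. \<bar>v a\<bar>)"
    and "ereal (2 * L) / t0 \<le> ereal \<beta>"
  shows "(\<integral> \<xi>. (emp_norm n Z (\<lambda>z. ewa n M Z fs (\<lambda>j. 1 / real M) \<beta>
                                      (\<lambda>i. f (Z i) + \<xi> i) z - f z))\<^sup>2
            \<partial>(PiM {1..n} (\<lambda>_. D)))
         \<le> (MIN j\<in>{1..M}. (emp_norm n Z (\<lambda>z. fs j z - f z))\<^sup>2) + \<beta> * ln (real M) / real n"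
proof -
  note pD = assms(1) and sD = assms(2) and iD = assms(3) and mD = assms(4) and AN = assms(5)
    and n1 = assms(6) and M1 = assms(7) and Ldef = assms(8) and bpos = assms(9) and b4 = assms(10)
    and tL = assms(11)
  interpret D: prob_space D by fact
  define I where "I = {1..n}"
  define J where "J = {1..M}"
  define d where "d j i = fs j (Z i) - f (Z i)" for j i
  define \<pi> where "\<pi> = 1 / real M"
  define cc where "cc \<xi> j = (\<Sum>i\<in>I. (\<xi> i - d j i)\<^sup>2)" for \<xi> :: "nat \<Rightarrow> real" and j
  define w where "w \<xi> j = exp (- cc \<xi> j / \<beta>) * \<pi> / (\<Sum>k\<in>J. exp (- cc \<xi> k / \<beta>) * \<pi>)" for \<xi> j
  define db where "db \<xi> i = (\<Sum>j\<in>J. w \<xi> j * d j i)" for \<xi> i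
  define Vs where "Vs \<xi> i = (\<Sum>j\<in>J. w \<xi> j * (d j i - db \<xi> i)\<^sup>2)" for \<xi> i
  define T where "T \<xi> i = 2 * \<xi> i * db \<xi> i - Vs \<xi> i" for \<xi> i
  define qq where "qq \<xi> i j = \<pi> * exp (- ((\<Sum>l\<in>I - {i}. (\<xi> l - d j l)\<^sup>2) + (d j i)\<^sup>2) / \<beta>)" for \<xi> i j
  define P where "P = PiM I (\<lambda>_. D)"
  have finI: "finite I" and finJ: "finite J" and Jne: "J \<noteq> {}" and cardJ: "card J = M"
    using M1 by (auto simp: I_def J_def)
  have pipos: "\<pi> > 0" using M1 by (simp add: \<pi>_def)
  have npos: "real n > 0" using n1 by simp
  have sumw: "(\<Sum>j\<in>J. w \<xi> j) = 1" for \<xi>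
  proof -
    have "(\<Sum>k\<in>J. exp (- cc \<xi> k / \<beta>) * \<pi>) > 0" using finJ Jne pipos by (intro sum_pos) auto
    then show ?thesis unfolding w_def by (simp add: sum_divide_distrib[symmetric])
  qed
  have inst: "oned J (qq \<xi> i) \<beta>" for \<xi> i
    by unfold_locales (use finJ Jne pipos bpos in \<open>auto simp: qq_def\<close>)
  have wp: "w \<xi> j = oned.p J (qq \<xi> i) (\<lambda>j. d j i) \<beta> j (\<xi> i)" if i: "i \<in> I" and j: "j \<in> J" for \<xi> i j
  proof -
    have cj: "cc \<xi> k = (\<xi> i - d k i)\<^sup>2 + (\<Sum>l\<in>I - {i}. (\<xi> l - d k l)\<^sup>2)" for k
      unfolding cc_def using finI i by (simp add: sum.remove)
    show ?thesis
      unfolding w_def oned.p_def[OF inst] oned.G_def[OF inst] qq_def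
      by (rule wform[OF cj bpos j])
  qed
  have dbh: "db \<xi> i = oned.h J (qq \<xi> i) (\<lambda>j. d j i) \<beta> (\<xi> i)" if i: "i \<in> I" for \<xi> i
    unfolding db_def oned.h_def[OF inst] using wp[OF i] by (intro sum.cong refl) simp
  have VsV: "Vs \<xi> i = oned.V J (qq \<xi> i) (\<lambda>j. d j i) \<beta> (\<xi> i)" if i: "i \<in> I" for \<xi> i
    unfolding Vs_def oned.V_def[OF inst] using wp[OF i] dbh[OF i] by (intro sum.cong refl) simp
  have qq_upd: "qq (y(i := x)) i = qq y i" for y i x
    unfolding qq_def by (intro ext arg_cong2[where f="(*)"] refl arg_cong[where f=exp]
        arg_cong2[where f="(/)"] arg_cong[where f=uminus] arg_cong2[where f="(+)"] sum.cong) auto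
  define LS where "LS = {\<bar>fs j (Z i) - fs k (Z i)\<bar> | i j k. i \<in> {1..n} \<and> j \<in> {1..M} \<and> k \<in> {1..M}}"
  have LSfin: "finite LS"
  proof -
    have "LS = (\<lambda>(i, j, k). \<bar>fs j (Z i) - fs k (Z i)\<bar>) ` ({1..n} \<times> {1..M} \<times> {1..M})"
    proof (rule set_eqI, rule iffI)
      fix x assume "x \<in> LS"
      then obtain i j k where "x = \<bar>fs j (Z i) - fs k (Z i)\<bar>" "i \<in> {1..n}" "j \<in> {1..M}" "k \<in> {1..M}"
        unfolding LS_def by blast
      then show "x \<in> (\<lambda>(i, j, k). \<bar>fs j (Z i) - fs k (Z i)\<bar>) ` ({1..n} \<times> {1..M} \<times> {1..M})"
        by (intro image_eqI[where x="(i, j, k)"]) auto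
    next
      fix x assume "x \<in> (\<lambda>(i, j, k). \<bar>fs j (Z i) - fs k (Z i)\<bar>) ` ({1..n} \<times> {1..M} \<times> {1..M})"
      then show "x \<in> LS" unfolding LS_def by auto blast
    qed
    then show ?thesis by simp
  qed
  have Lb: "\<bar>d j i - d k i\<bar> \<le> L" if "i \<in> I" "j \<in> J" "k \<in> J" for i j k
  proof -
    have "\<bar>fs j (Z i) - fs k (Z i)\<bar> \<in> LS" unfolding LS_def using that by (auto simp: I_def J_def)
    then have "\<bar>fs j (Z i) - fs k (Z i)\<bar> \<le> L" unfolding Ldef LS_def[symmetric] using LSfin by simp
    then show ?thesis by (simp add: d_def)
  qed
  have L0: "L \<ge> 0"
  proof -
    have "1 \<in> I" "1 \<in> J" using n1 M1 by (auto simp: I_def J_def)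
    from Lb[OF this(1) this(2) this(2)] show ?thesis by simp
  qed
  have t0pos: "t0 > 0" using AN unfolding assumption_N_def by blast
  have t0L: "ereal (2 * L / \<beta>) \<le> t0"
  proof (cases t0)
    case (real r)
    with t0pos have r: "r > 0" by simp
    then have "2 * L / r \<le> \<beta>" using tL real by simp
    then have "2 * L \<le> \<beta> * r" using r by (simp add: field_simps)
    then have "2 * L / \<beta> \<le> r" using bpos by (simp add: field_simps)
    then show ?thesis using real by simp
  next
    case PInf then show ?thesis by simp
  next
    case MInf then show ?thesis using t0pos by simp
  qed
  have pw: "(\<Sum>i\<in>I. (db \<xi> i)\<^sup>2) \<le> (\<Sum>i\<in>I. (d k i)\<^sup>2) + \<beta> * ln (real M) - 2 * (\<Sum>i\<in>I. \<xi> i * d k i) + (\<Sum>i\<in>I. T \<xi> i)"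
    if k: "k \<in> J" for \<xi> k
  proof -
    have e: "(\<Sum>i\<in>I. (db \<xi> i)\<^sup>2) = (\<Sum>j\<in>J. w \<xi> j * cc \<xi> j) - (\<Sum>i\<in>I. (\<xi> i)\<^sup>2) + (\<Sum>i\<in>I. T \<xi> i)"
      unfolding T_def Vs_def db_def cc_def by (rule pointwise[OF sumw])
    have g: "(\<Sum>j\<in>J. w \<xi> j * cc \<xi> j) \<le> cc \<xi> k + \<beta> * ln (real M)"
      using gibbs[OF finJ k bpos pipos, of "cc \<xi>"] unfolding w_def cardJ .
    have c: "cc \<xi> k = (\<Sum>i\<in>I. (\<xi> i)\<^sup>2) - 2 * (\<Sum>i\<in>I. \<xi> i * d k i) + (\<Sum>i\<in>I. (d k i)\<^sup>2)"
    proof -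
      have "cc \<xi> k = (\<Sum>i\<in>I. (\<xi> i)\<^sup>2 - 2 * (\<xi> i * d k i) + (d k i)\<^sup>2)"
        unfolding cc_def by (intro sum.cong refl) (simp add: power2_diff)
      then show ?thesis by (simp add: sum.distrib sum_subtractf sum_distrib_left)
    qed
    show ?thesis using e g c by linarith
  qed
  have integrand: "(emp_norm n Z (\<lambda>z. ewa n M Z fs (\<lambda>j. 1 / real M) \<beta> (\<lambda>i. f (Z i) + \<xi> i) z - f z))\<^sup>2
        = (1 / real n) * (\<Sum>i\<in>I. (db \<xi> i)\<^sup>2)" for \<xi>
  proof -
    have sq: "(\<Sum>i\<in>{1..n}. (f (Z i) + \<xi> i - fs j (Z i))\<^sup>2) = (\<Sum>i\<in>{1..n}. (\<xi> i - (fs j (Z i) - f (Z i)))\<^sup>2)" for j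
      by (intro sum.cong refl) (simp add: algebra_simps)
    have ww: "ewa_weight n M Z fs (\<lambda>j. 1 / real M) \<beta> (\<lambda>i. f (Z i) + \<xi> i) j = w \<xi> j" for j
      unfolding ewa_weight_def w_def cc_def d_def \<pi>_def I_def J_def sq ..
    have ew: "ewa n M Z fs (\<lambda>j. 1 / real M) \<beta> (\<lambda>i. f (Z i) + \<xi> i) (Z i) - f (Z i) = db \<xi> i" for i
    proof -
      have "db \<xi> i = (\<Sum>j\<in>J. w \<xi> j * fs j (Z i)) - (\<Sum>j\<in>J. w \<xi> j) * f (Z i)"
        unfolding db_def d_def by (simp add: algebra_simps sum_subtractf sum_distrib_right sum_distrib_left)
      then show ?thesis unfolding ewa_def ww using sumw[of \<xi>] by (simp add: J_def)
    qed
    show ?thesis unfolding emp_norm_def ew I_def by (rule real_sqrt_pow2) (simp add: sum_nonneg)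
  qed
  have emp_k: "(emp_norm n Z (\<lambda>z. fs k z - f z))\<^sup>2 = (1 / real n) * (\<Sum>i\<in>I. (d k i)\<^sup>2)" for k
  proof -
    have nn: "0 \<le> 1 / real n * (\<Sum>i\<in>{1..n}. (fs k (Z i) - f (Z i))\<^sup>2)" by (simp add: sum_nonneg)
    show ?thesis unfolding emp_norm_def real_sqrt_pow2[OF nn] d_def I_def ..
  qed
  have pP: "prob_space P" unfolding P_def by (rule prob_space_PiM) (use pD in auto)
  interpret PS: prob_space P by fact
  have comp: "(\<lambda>\<xi>. \<xi> i) \<in> borel_measurable P" if i: "i \<in> I" for i
  proof -
    have "(\<lambda>\<xi>. \<xi> i) \<in> measurable P D" unfolding P_def using i by (rule measurable_component_singleton)
    then show ?thesis using measurable_cong_sets[OF refl sD, of P] by simp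
  qed
  note comp[measurable]
  have m_cc[measurable]: "(\<lambda>\<xi>. cc \<xi> j) \<in> borel_measurable P" for j unfolding cc_def by measurable
  have m_w[measurable]: "(\<lambda>\<xi>. w \<xi> j) \<in> borel_measurable P" for j unfolding w_def by measurable
  have m_db[measurable]: "(\<lambda>\<xi>. db \<xi> i) \<in> borel_measurable P" for i unfolding db_def by measurable
  have m_Vs[measurable]: "(\<lambda>\<xi>. Vs \<xi> i) \<in> borel_measurable P" for i unfolding Vs_def by measurable
  have m_T[measurable]: "(\<lambda>\<xi>. T \<xi> i) \<in> borel_measurable P" if "i \<in> I" for i unfolding T_def using that by measurable
  have distrc: "distr P D (\<lambda>\<xi>. \<xi> i) = D" if i: "i \<in> I" for i
    unfolding P_def by (rule distr_PiM_component) (use pD i in auto)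
  have mcD: "(\<lambda>\<xi>. \<xi> i) \<in> measurable P D" if i: "i \<in> I" for i
    unfolding P_def using i by (rule measurable_component_singleton)
  have mD_b: "(\<lambda>x. x) \<in> borel_measurable D" by (rule measurable_ident_sets[OF sD])
  have iXi: "integrable P (\<lambda>\<xi>. \<xi> i)" if i: "i \<in> I" for i
    using integrable_distr_eq[OF mcD[OF i] mD_b] iD distrc[OF i] by simp
  have intXi: "(\<integral>\<xi>. \<xi> i \<partial>P) = 0" if i: "i \<in> I" for i
    using integral_distr[OF mcD[OF i] mD_b] mD distrc[OF i] by simp
  define Bi where "Bi i = (\<Sum>j\<in>J. \<bar>d j i\<bar>)" for i
  have Bi0: "Bi i \<ge> 0" for i unfolding Bi_def by (simp add: sum_nonneg)
  have dbB: "\<bar>db \<xi> i\<bar> \<le> Bi i" if i: "i \<in> I" for \<xi> i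
    unfolding dbh[OF i] Bi_def by (rule oned.h_bound[OF inst])
  have VsB: "0 \<le> Vs \<xi> i \<and> Vs \<xi> i \<le> L\<^sup>2" if i: "i \<in> I" for \<xi> i
    unfolding VsV[OF i] using oned.V_nonneg[OF inst] oned.V_bound[OF inst Lb[OF i]] by auto
  have iT: "integrable P (\<lambda>\<xi>. T \<xi> i)" if i: "i \<in> I" for i
  proof (rule Bochner_Integration.integrable_bound)
    show "integrable P (\<lambda>\<xi>. 2 * Bi i * \<bar>\<xi> i\<bar> + L\<^sup>2)" using iXi[OF i] by simp
    show "(\<lambda>\<xi>. T \<xi> i) \<in> borel_measurable P" using i by measurable
    show "AE \<xi> in P. norm (T \<xi> i) \<le> norm (2 * Bi i * \<bar>\<xi> i\<bar> + L\<^sup>2)"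
    proof (rule AE_I2)
      fix \<xi>
      have "\<bar>2 * \<xi> i * db \<xi> i\<bar> \<le> 2 * Bi i * \<bar>\<xi> i\<bar>"
        using mult_left_mono[OF dbB[OF i, of \<xi>], of "2 * \<bar>\<xi> i\<bar>"] by (simp add: abs_mult mult_ac)
      moreover have "\<bar>T \<xi> i\<bar> \<le> \<bar>2 * \<xi> i * db \<xi> i\<bar> + \<bar>Vs \<xi> i\<bar>" unfolding T_def by (rule abs_triangle_ineq4)
      ultimately show "norm (T \<xi> i) \<le> norm (2 * Bi i * \<bar>\<xi> i\<bar> + L\<^sup>2)"
        using VsB[OF i, of \<xi>] Bi0[of i] by simp
    qed
  qed
  have iLHS: "integrable P (\<lambda>\<xi>. (1 / real n) * (\<Sum>i\<in>I. (db \<xi> i)\<^sup>2))"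
  proof (rule PS.integrable_const_bound[where B="(1 / real n) * (\<Sum>i\<in>I. (Bi i)\<^sup>2)"])
    show "(\<lambda>\<xi>. (1 / real n) * (\<Sum>i\<in>I. (db \<xi> i)\<^sup>2)) \<in> borel_measurable P" by measurable
    show "AE \<xi> in P. norm ((1 / real n) * (\<Sum>i\<in>I. (db \<xi> i)\<^sup>2)) \<le> (1 / real n) * (\<Sum>i\<in>I. (Bi i)\<^sup>2)"
    proof (rule AE_I2)
      fix \<xi>
      have "(\<Sum>i\<in>I. (db \<xi> i)\<^sup>2) \<le> (\<Sum>i\<in>I. (Bi i)\<^sup>2)"
      proof (rule sum_mono)
        fix i assume i: "i \<in> I"
        have "\<bar>db \<xi> i\<bar>\<^sup>2 \<le> (Bi i)\<^sup>2" by (rule power_mono[OF dbB[OF i]]) simp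
        then show "(db \<xi> i)\<^sup>2 \<le> (Bi i)\<^sup>2" by simp
      qed
      then show "norm ((1 / real n) * (\<Sum>i\<in>I. (db \<xi> i)\<^sup>2)) \<le> (1 / real n) * (\<Sum>i\<in>I. (Bi i)\<^sup>2)"
        using npos by (simp add: sum_nonneg divide_right_mono)
    qed
  qed
  interpret PSF: product_sigma_finite "\<lambda>_::nat. D"
    by (simp add: product_sigma_finite_def prob_space_imp_sigma_finite[OF pD])
  have b4': "4 * (SUP a. \<bar>v a\<bar>) \<le> \<beta>" using b4 by simp
  have intT: "(\<integral>\<xi>. T \<xi> i \<partial>P) \<le> 0" if i: "i \<in> I" for i
  proof -
    have Ii: "insert i (I - {i}) = I" using i by auto
    have "(\<integral>\<xi>. T \<xi> i \<partial>P) = (\<integral>y. (\<integral>x. T (y(i := x)) i \<partial>D) \<partial>PiM (I - {i}) (\<lambda>_. D))"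
      using PSF.product_integral_insert[of "I - {i}" i "\<lambda>\<xi>. T \<xi> i"] iT[OF i] finI
      unfolding P_def Ii by simp
    also have "\<dots> \<le> 0"
    proof -
      have inner: "(\<integral>x. T (y(i := x)) i \<partial>D) \<le> 0" for y
      proof -
        have Teq: "T (y(i := x)) i = 2 * (x * oned.h J (qq y i) (\<lambda>j. d j i) \<beta> x) - oned.V J (qq y i) (\<lambda>j. d j i) \<beta> x" for x
          unfolding T_def dbh[OF i] VsV[OF i] qq_upd by simp
        note OM = oned.oned_main[where e="\<lambda>j. d j i", OF inst[of y i] pD sD iD mD AN Lb[OF i] b4' t0L]
        have "(\<integral>x. T (y(i := x)) i \<partial>D) = 2 * (\<integral>x. x * oned.h J (qq y i) (\<lambda>j. d j i) \<beta> x \<partial>D) - (\<integral>x. oned.V J (qq y i) (\<lambda>j. d j i) \<beta> x \<partial>D)"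
          unfolding Teq using OM(1,2) by simp
        then show ?thesis using OM(3) by simp
      qed
      have "0 \<le> (\<integral>y. - (\<integral>x. T (y(i := x)) i \<partial>D) \<partial>PiM (I - {i}) (\<lambda>_. D))"
        by (rule integral_nonneg_AE) (use inner in \<open>auto intro!: AE_I2\<close>)
      then show ?thesis by simp
    qed
    finally show ?thesis .
  qed
  define g where "g k = (emp_norm n Z (\<lambda>z. fs k z - f z))\<^sup>2" for k
  have "Min (g ` J) \<in> g ` J" using finJ Jne by (intro Min_in) auto
  then obtain k where k: "k \<in> J" and kmin: "(MIN j\<in>{1..M}. (emp_norm n Z (\<lambda>z. fs j z - f z))\<^sup>2) = g k"
    unfolding g_def J_def by auto
  define A where "A \<xi> = (\<Sum>i\<in>I. \<xi> i * d k i)" for \<xi> :: "nat \<Rightarrow> real"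
  define Bs where "Bs \<xi> = (\<Sum>i\<in>I. T \<xi> i)" for \<xi>
  define Cst where "Cst = (\<Sum>i\<in>I. (d k i)\<^sup>2) + \<beta> * ln (real M)"
  have iA: "integrable P A" unfolding A_def using iXi by (intro Bochner_Integration.integrable_sum integrable_mult_left) auto
  have intA: "(\<integral>\<xi>. A \<xi> \<partial>P) = 0"
    unfolding A_def using iXi intXi by (subst Bochner_Integration.integral_sum) (auto intro: integrable_mult_left)
  have iB: "integrable P Bs" unfolding Bs_def using iT by (intro Bochner_Integration.integrable_sum) auto
  have intB: "(\<integral>\<xi>. Bs \<xi> \<partial>P) \<le> 0"
  proof -
    have "(\<integral>\<xi>. Bs \<xi> \<partial>P) = (\<Sum>i\<in>I. (\<integral>\<xi>. T \<xi> i \<partial>P))"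
      unfolding Bs_def using iT by (intro Bochner_Integration.integral_sum) auto
    also have "\<dots> \<le> 0" using intT by (intro sum_nonpos) auto
    finally show ?thesis .
  qed
  have iR: "integrable P (\<lambda>\<xi>. (1 / real n) * (Cst - 2 * A \<xi> + Bs \<xi>))"
    using iA iB by simp
  have "(\<integral>\<xi>. (emp_norm n Z (\<lambda>z. ewa n M Z fs (\<lambda>j. 1 / real M) \<beta> (\<lambda>i. f (Z i) + \<xi> i) z - f z))\<^sup>2 \<partial>PiM {1..n} (\<lambda>_. D))
      = (\<integral>\<xi>. (1 / real n) * (\<Sum>i\<in>I. (db \<xi> i)\<^sup>2) \<partial>P)"
    unfolding integrand P_def I_def ..
  also have "\<dots> \<le> (\<integral>\<xi>. (1 / real n) * (Cst - 2 * A \<xi> + Bs \<xi>) \<partial>P)"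
  proof (rule integral_mono[OF iLHS iR])
    fix \<xi>
    show "(1 / real n) * (\<Sum>i\<in>I. (db \<xi> i)\<^sup>2) \<le> (1 / real n) * (Cst - 2 * A \<xi> + Bs \<xi>)"
      using pw[OF k, of \<xi>] npos unfolding Cst_def A_def Bs_def by (intro mult_left_mono) auto
  qed
  also have "\<dots> = (1 / real n) * (Cst - 2 * (\<integral>\<xi>. A \<xi> \<partial>P) + (\<integral>\<xi>. Bs \<xi> \<partial>P))"
    using iA iB by (simp add: PS.prob_space)
  also have "\<dots> \<le> (1 / real n) * Cst"
    using intA intB npos by (intro mult_left_mono) auto
  also have "\<dots> = g k + \<beta> * ln (real M) / real n"
    unfolding g_def emp_k Cst_def by (simp add: add_divide_distrib)
  finally show ?thesis unfolding kmin .
qed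


end
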